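(* Let $a,b\colon\mathbb N\to\mathbb Z\setminus\{0\}$ be injective sequences and let $c\colon\mathbb N\to[0,1/4]$ be any sequence. Then there exist a probability space $(X,\mathcal X,\mu)$, invertible measure preserving transformations $T,S\colon X\to X$, and $A\in\mathcal X$ such that $c(n)=\mu(T^{-a(n)}A\cap S^{-b(n)}A)$ for every $n\in\mathbb N$. *)

theory Defs
  imports "HOL-Probability.Probability"
begin

definition invertible_mpt :: "'a measure \<Rightarrow> ('a \<Rightarrow> 'a) \<Rightarrow> bool" where
  "invertible_mpt M T \<longleftrightarrow>
     bij_betw T (space M) (space M) \<and>
     T \<in> measurable M M \<and> distr M M T = M \<and>
     the_inv_into (space M) T \<in> measurable M M \<and>
     distr M M (the_inv_into (space M) T) = M"

definition ziter :: "'a measure \<Rightarrow> ('a \<Rightarrow> 'a) \<Rightarrow> int \<Rightarrow> 'a \<Rightarrow> 'a" where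
  "ziter M T k = (if 0 \<le> k then T ^^ nat k else (the_inv_into (space M) T) ^^ nat (- k))"

text \<open>The set T^{-k} A = {x. T^k x \<in> A}.\<close>
definition zpreimage :: "'a measure \<Rightarrow> ('a \<Rightarrow> 'a) \<Rightarrow> int \<Rightarrow> 'a set \<Rightarrow> 'a set" where
  "zpreimage M T k A = {x \<in> space M. ziter M T k x \<in> A}"

end

theory Submission
  imports Defs
begin

definition nu :: "real measure" where "nu = uniform_measure lborel {0..1}"

definition phi :: "real \<Rightarrow> real \<Rightarrow> real" where
  "phi t x = (if 0 \<le> x \<and> x \<le> t then t - x else x)"

lemma phi_inv: "phi t (phi t x) = x"
  by (auto simp: phi_def)

lemma phi_meas[measurable]: "phi t \<in> borel_measurable borel"
  unfolding phi_def by measurable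

lemma prob_nu: "prob_space nu"
  unfolding nu_def by (rule prob_space_uniform_measure) auto

lemma sets_nu[simp, measurable_cong]: "sets nu = sets borel"
  by (simp add: nu_def)

lemma space_nu[simp]: "space nu = UNIV"
  by (simp add: nu_def)

lemma refl_lborel: "distr lborel borel (\<lambda>x. t - x) = (lborel :: real measure)"
proof -
  have "distr lborel borel (\<lambda>x::real. t - x) = distr (distr lborel borel uminus) borel ((+) t)"
    by (subst distr_distr) (auto simp: comp_def)
  also have "\<dots> = lborel" by (simp add: lborel_distr_uminus lborel_distr_plus)
  finally show ?thesis .
qed

lemma refl_emeasure:
  assumes "X \<in> sets borel"
  shows "emeasure lborel {x::real. t - x \<in> X} = emeasure lborel X"
proof -
  have "emeasure lborel X = emeasure (distr lborel borel (\<lambda>x. t - x)) X"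
    by (simp add: refl_lborel)
  also have "\<dots> = emeasure lborel ((\<lambda>x. t - x) -` X \<inter> space lborel)"
    using assms by (intro emeasure_distr) auto
  finally show ?thesis by (simp add: vimage_def)
qed

lemma emeasure_nu: "E \<in> sets borel \<Longrightarrow> emeasure nu E = emeasure lborel ({0..1} \<inter> E)"
  unfolding nu_def by (subst emeasure_uniform_measure) (auto simp: divide_ennreal_def)

lemma phi_mp:
  assumes "0 \<le> t" "t \<le> 1"
  shows "distr nu nu (phi t) = nu"
proof (rule measure_eqI)
  show "sets (distr nu nu (phi t)) = sets nu" by simp
  fix E assume E: "E \<in> sets (distr nu nu (phi t))"
  hence E': "E \<in> sets borel" by simp
  have pE: "phi t -` E \<in> sets borel" using measurable_sets[OF phi_meas E'] by simp
  have "emeasure (distr nu nu (phi t)) E = emeasure nu (phi t -` E)"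
    using E' by (subst emeasure_distr) auto
  also have "\<dots> = emeasure lborel ({0..1} \<inter> phi t -` E)"
    using pE by (subst emeasure_nu) auto
  also have "{0..1} \<inter> phi t -` E = {x. t - x \<in> E \<inter> {0..t}} \<union> ({t<..1} \<inter> E)"
    using assms by (auto simp: phi_def split: if_splits)
  also have "emeasure lborel \<dots> = emeasure lborel {x. t - x \<in> E \<inter> {0..t}} + emeasure lborel ({t<..1} \<inter> E)"
    using E' by (intro plus_emeasure[symmetric]) auto
  also have "\<dots> = emeasure lborel (E \<inter> {0..t}) + emeasure lborel ({t<..1} \<inter> E)"
    using E' by (subst refl_emeasure) auto
  also have "\<dots> = emeasure lborel ((E \<inter> {0..t}) \<union> ({t<..1} \<inter> E))"
    using E' by (intro plus_emeasure) auto
  also have "(E \<inter> {0..t}) \<union> ({t<..1} \<inter> E) = {0..1} \<inter> E"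
    using assms by auto
  also have "emeasure lborel \<dots> = emeasure nu E"
    using E' by (simp add: emeasure_nu)
  finally show "emeasure (distr nu nu (phi t)) E = emeasure nu E" .
qed

lemma phi_value:
  assumes "1/2 \<le> t" "t \<le> 1"
  shows "measure nu ({0..<1/2} \<inter> phi t -` {0..<1/2}) = 1 - t"
proof -
  have "{0..1} \<inter> ({0..<1/2} \<inter> phi t -` {0..<1/2}) = {t - 1/2<..<1/2::real}"
    using assms by (auto simp: phi_def split: if_splits)
  moreover have "emeasure nu ({0..<1/2} \<inter> phi t -` {0..<1/2}) = emeasure lborel ({0..1} \<inter> ({0..<1/2} \<inter> phi t -` {0..<1/2}))"
    by (rule emeasure_nu) measurable
  ultimately have "emeasure nu ({0..<1/2} \<inter> phi t -` {0..<1/2}) = ennreal (1 - t)"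
    using assms by simp
  thus ?thesis using assms by (simp add: measure_def)
qed


definition PP :: "(nat \<Rightarrow> real) measure" where "PP = PiM UNIV (\<lambda>_. nu)"

lemma space_PP[simp]: "space PP = UNIV"
  by (auto simp: PP_def space_PiM)

lemma prob_PP: "prob_space PP"
  unfolding PP_def by (intro prob_space_PiM prob_nu)

lemma meas_map:
  assumes "\<And>i. \<psi> i \<in> borel_measurable borel"
  shows "(\<lambda>x i. \<psi> i (x (\<rho> i))) \<in> measurable PP PP"
  unfolding PP_def
  by (rule measurable_PiM_single') (use assms in auto)

lemma mp_map:
  assumes rho: "bij \<rho>" and psi: "\<And>i. \<psi> i \<in> borel_measurable borel"
    and d: "\<And>i. distr nu nu (\<psi> i) = nu"
  shows "distr PP PP (\<lambda>x i. \<psi> i (x (\<rho> i))) = PP"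
proof -
  let ?F = "\<lambda>x i. \<psi> i (x (\<rho> i))"
  have Fm: "?F \<in> measurable PP PP" using meas_map psi by blast
  interpret nu: prob_space nu by (rule prob_nu)
  have pre: "emeasure nu (\<psi> j -` X) = emeasure nu X" if "X \<in> sets borel" for j X
  proof -
    have "emeasure nu X = emeasure (distr nu nu (\<psi> j)) X" by (simp add: d)
    also have "\<dots> = emeasure nu (\<psi> j -` X)"
      using that psi by (subst emeasure_distr) auto
    finally show ?thesis by simp
  qed
  show ?thesis unfolding PP_def
  proof (rule measure_eqI_PiM_infinite[symmetric, OF refl])
    show "sets (distr (Pi\<^sub>M (UNIV::nat set) (\<lambda>_. nu)) (Pi\<^sub>M (UNIV::nat set) (\<lambda>_. nu)) ?F) = sets (Pi\<^sub>M (UNIV::nat set) (\<lambda>_. nu))" by simp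
    show "finite_measure (Pi\<^sub>M (UNIV::nat set) (\<lambda>_. nu))"
      using prob_PP unfolding PP_def prob_space_def by blast
    fix A J assume J: "finite (J::nat set)" "J \<subseteq> UNIV" and A: "\<And>i. i \<in> J \<Longrightarrow> A i \<in> sets nu"
    have iv: "inv \<rho> (\<rho> j) = j" for j using rho by (simp add: bij_is_inj)
    have "emeasure (Pi\<^sub>M (UNIV::nat set) (\<lambda>_. nu)) (prod_emb UNIV (\<lambda>_. nu) J (Pi\<^sub>E J A)) = (\<Prod>j\<in>J. emeasure nu (A j))"
      using J A by (intro emeasure_PiM_emb prob_nu) auto
    also have "\<dots> = (\<Prod>j\<in>J. emeasure nu (\<psi> j -` A j))"
      using A by (intro prod.cong refl pre[symmetric]) auto
    also have "\<dots> = (\<Prod>k\<in>\<rho>`J. emeasure nu (\<psi> (inv \<rho> k) -` A (inv \<rho> k)))"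
      by (subst prod.reindex[OF inj_on_subset[OF bij_is_inj[OF rho] subset_UNIV]]) (simp add: iv)
    also have "\<dots> = emeasure (Pi\<^sub>M (UNIV::nat set) (\<lambda>_. nu)) (prod_emb UNIV (\<lambda>_. nu) (\<rho>`J) (Pi\<^sub>E (\<rho>`J) (\<lambda>k. \<psi> (inv \<rho> k) -` A (inv \<rho> k))))"
    proof (rule emeasure_PiM_emb[symmetric])
      fix k assume "k \<in> \<rho>`J"
      then obtain j where j: "j \<in> J" "k = \<rho> j" by auto
      show "\<psi> (inv \<rho> k) -` A (inv \<rho> k) \<in> sets nu"
        using measurable_sets[OF psi, of "A j"] A[OF j(1)] j by (simp add: iv)
    qed (use J prob_nu in auto)
    also have "prod_emb UNIV (\<lambda>_. nu) (\<rho>`J) (Pi\<^sub>E (\<rho>`J) (\<lambda>k. \<psi> (inv \<rho> k) -` A (inv \<rho> k)))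
        = ?F -` prod_emb UNIV (\<lambda>_. nu) J (Pi\<^sub>E J A) \<inter> space (Pi\<^sub>M (UNIV::nat set) (\<lambda>_. nu))"
      by (auto simp: prod_emb_def space_PiM PiE_iff iv)
    also have "emeasure (Pi\<^sub>M (UNIV::nat set) (\<lambda>_. nu)) \<dots> = emeasure (distr (Pi\<^sub>M (UNIV::nat set) (\<lambda>_. nu)) (Pi\<^sub>M (UNIV::nat set) (\<lambda>_. nu)) ?F) (prod_emb UNIV (\<lambda>_. nu) J (Pi\<^sub>E J A))"
      using Fm J A unfolding PP_def by (intro emeasure_distr[symmetric] sets_PiM_I) auto
    finally show "emeasure (Pi\<^sub>M (UNIV::nat set) (\<lambda>_. nu)) (prod_emb UNIV (\<lambda>_. nu) J (Pi\<^sub>E J A)) =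
      emeasure (distr (Pi\<^sub>M (UNIV::nat set) (\<lambda>_. nu)) (Pi\<^sub>M (UNIV::nat set) (\<lambda>_. nu)) ?F) (prod_emb UNIV (\<lambda>_. nu) J (Pi\<^sub>E J A))" .
  qed
qed


definition EE :: "bool \<times> int \<Rightarrow> nat" where "EE = to_nat"
definition DD :: "nat \<Rightarrow> bool \<times> int" where "DD = from_nat"

lemma DD_EE[simp]: "DD (EE p) = p" by (simp add: EE_def DD_def)
lemma EE_inj[simp]: "EE p = EE q \<longleftrightarrow> p = q" by (metis DD_EE)

definition lift :: "(bool \<times> int \<Rightarrow> bool \<times> int) \<Rightarrow> nat \<Rightarrow> nat" where
  "lift g i = (if i \<in> range EE then EE (g (DD i)) else i)"

lemma lift_EE[simp]: "lift g (EE p) = EE (g p)" by (simp add: lift_def)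
lemma lift_lift[simp]: "lift g (lift h i) = lift (g \<circ> h) i"
  by (auto simp: lift_def)

lemma lift_bij:
  assumes "\<And>p. g (h p) = p" "\<And>p. h (g p) = p"
  shows "bij (lift g)"
proof (rule o_bij[of "lift h"])
  show "lift h \<circ> lift g = id" using assms by (auto simp: lift_def fun_eq_iff)
  show "lift g \<circ> lift h = id" using assms by (auto simp: lift_def fun_eq_iff)
qed

definition sh :: "int \<Rightarrow> nat \<Rightarrow> nat" where "sh k = lift (\<lambda>(c,j). (c, j + k))"

lemma sh_sh[simp]: "sh k (sh l i) = sh (l + k) i"
  by (auto simp: sh_def lift_def add.assoc)
lemma sh_0[simp]: "sh 0 i = i" by (auto simp: sh_def lift_def)
lemma sh_EE[simp]: "sh k (EE (c, j)) = EE (c, j + k)" by (simp add: sh_def)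
lemma bij_sh: "bij (sh k)" unfolding sh_def by (rule lift_bij[of _ "\<lambda>(c,j). (c, j - k)"]) auto

definition Tm :: "(nat \<Rightarrow> real) \<Rightarrow> (nat \<Rightarrow> real)" where "Tm x = (\<lambda>i. x (sh 1 i))"
definition Ti :: "(nat \<Rightarrow> real) \<Rightarrow> (nat \<Rightarrow> real)" where "Ti x = (\<lambda>i. x (sh (-1) i))"

lemma Tm_Ti[simp]: "Tm (Ti x) = x" "Ti (Tm x) = x" by (auto simp: Tm_def Ti_def)

lemma Tm_pow: "(Tm ^^ n) x = (\<lambda>i. x (sh (int n) i))"
  by (induction n arbitrary: x) (auto simp: Tm_def add.commute)
lemma Ti_pow: "(Ti ^^ n) x = (\<lambda>i. x (sh (- int n) i))"
  by (induction n arbitrary: x) (auto simp: Ti_def add.commute)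

lemma inv_Tm: "the_inv_into UNIV Tm = Ti"
proof
  fix y
  have "inj Tm" by (metis Tm_Ti(2) injI)
  thus "the_inv_into UNIV Tm y = Ti y" by (intro the_inv_into_f_eq) auto
qed

lemma ziter_Tm: "ziter PP Tm k = (\<lambda>x i. x (sh k i))"
  by (auto simp: ziter_def inv_Tm Tm_pow Ti_pow fun_eq_iff)

lemma conj_pow:
  assumes "\<And>x. R (R x) = x"
  shows "((R \<circ> f \<circ> R) ^^ n) = R \<circ> (f ^^ n) \<circ> R"
  by (induction n) (auto simp: assms fun_eq_iff)


definition swp :: "(nat \<Rightarrow> int) \<Rightarrow> (nat \<Rightarrow> int) \<Rightarrow> bool \<times> int \<Rightarrow> bool \<times> int" where
  "swp a b p = (case p of (False, j) \<Rightarrow> (if j = 0 then (True, 0) else if j \<in> range a then (True, b (inv a j)) else (False, j))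
                | (True, j) \<Rightarrow> (if j = 0 then (False, 0) else if j \<in> range b then (False, a (inv b j)) else (True, j)))"

definition lab :: "(nat \<Rightarrow> int) \<Rightarrow> (nat \<Rightarrow> int) \<Rightarrow> bool \<times> int \<Rightarrow> nat option" where
  "lab a b p = (case p of (False, j) \<Rightarrow> (if j \<in> range a then Some (inv a j) else None)
                | (True, j) \<Rightarrow> (if j \<in> range b then Some (inv b j) else None))"

locale cset =
  fixes a b :: "nat \<Rightarrow> int" and c :: "nat \<Rightarrow> real"
  assumes ia: "inj a" and ib: "inj b" and a0: "\<And>n. a n \<noteq> 0" and b0: "\<And>n. b n \<noteq> 0"
    and cb: "\<And>n. 0 \<le> c n \<and> c n \<le> 1 / 4"
begin

lemma ainv[simp]: "inv a (a n) = n" using ia by simp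
lemma binv[simp]: "inv b (b n) = n" using ib by simp

lemma swp_swp[simp]: "swp a b (swp a b p) = p"
  using a0 b0 ia ib by (auto simp: swp_def split: bool.splits prod.splits dest: injD)

lemma lab_swp[simp]: "lab a b (swp a b p) = lab a b p"
  using a0 b0 by (auto simp: swp_def lab_def split: bool.splits prod.splits)

definition rho :: "nat \<Rightarrow> nat" where "rho = lift (swp a b)"

lemma rho_rho[simp]: "rho (rho i) = i" by (auto simp: rho_def lift_def)
lemma bij_rho: "bij rho" unfolding rho_def by (rule lift_bij[of _ "swp a b"]) auto

definition psi :: "nat \<Rightarrow> real \<Rightarrow> real" where
  "psi i = (if i \<in> range EE then (case lab a b (DD i) of Some n \<Rightarrow> phi (1 - c n) | None \<Rightarrow> (\<lambda>v. v)) else (\<lambda>v. v))"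

lemma psi_rho[simp]: "psi (rho i) = psi i"
  by (auto simp: psi_def rho_def lift_def)

lemma psi_psi[simp]: "psi i (psi i v) = v"
  by (auto simp: psi_def phi_inv split: option.splits)

lemma psi_meas: "psi i \<in> borel_measurable borel"
  by (auto simp: psi_def split: option.splits)

lemma psi_mp: "distr nu nu (psi i) = nu"
proof -
  have [simp]: "distr nu nu (\<lambda>v. v) = nu" by (simp add: distr_id2)
  have h1: "0 \<le> 1 - c n" "1 - c n \<le> 1" "c n \<le> 1" "0 \<le> c n" for n using cb[of n] by linarith+
  show ?thesis
    by (auto simp: psi_def h1 split: option.splits intro!: phi_mp)
qed

definition Rm :: "(nat \<Rightarrow> real) \<Rightarrow> (nat \<Rightarrow> real)" where
  "Rm x = (\<lambda>i. psi i (x (rho i)))"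

lemma Rm_Rm[simp]: "Rm (Rm x) = x" by (simp add: Rm_def)

definition Sm where "Sm = Rm \<circ> Tm \<circ> Rm"

lemma inv_Sm: "the_inv_into UNIV Sm = Rm \<circ> Ti \<circ> Rm"
proof
  fix y
  have "inj Sm" unfolding Sm_def by (rule injI) (metis Rm_Rm Tm_Ti(2) comp_apply)
  thus "the_inv_into UNIV Sm y = (Rm \<circ> Ti \<circ> Rm) y" by (intro the_inv_into_f_eq) (auto simp: Sm_def)
qed

lemma Sm_pow: "Sm ^^ n = Rm \<circ> Tm ^^ n \<circ> Rm"
  unfolding Sm_def by (rule conj_pow) simp
lemma Si_pow: "(Rm \<circ> Ti \<circ> Rm) ^^ n = Rm \<circ> Ti ^^ n \<circ> Rm"
  by (rule conj_pow) simp

lemma ziter_Sm: "ziter PP Sm k = Rm \<circ> ziter PP Tm k \<circ> Rm"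
  unfolding ziter_def space_PP inv_Sm inv_Tm Sm_pow Si_pow by simp

lemma Rm_meas: "Rm \<in> measurable PP PP"
  unfolding Rm_def by (rule meas_map) (rule psi_meas)
lemma Rm_mp: "distr PP PP Rm = PP"
  unfolding Rm_def by (rule mp_map[OF bij_rho psi_meas psi_mp])

end

lemma Tm_meas: "Tm \<in> measurable PP PP"
  using meas_map[of "\<lambda>i v. v" "sh 1"] by (simp add: Tm_def[abs_def])
lemma Tm_mp: "distr PP PP Tm = PP"
  using mp_map[of "sh 1" "\<lambda>i v. v"] bij_sh by (simp add: Tm_def[abs_def] distr_id2)
lemma Ti_meas: "Ti \<in> measurable PP PP"
  using meas_map[of "\<lambda>i v. v" "sh (-1)"] by (simp add: Ti_def[abs_def])
lemma Ti_mp: "distr PP PP Ti = PP"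
  using mp_map[of "sh (-1)" "\<lambda>i v. v"] bij_sh by (simp add: Ti_def[abs_def] distr_id2)


lemma mp_comp:
  assumes "f \<in> measurable PP PP" "g \<in> measurable PP PP" "distr PP PP f = PP" "distr PP PP g = PP"
  shows "f \<circ> g \<in> measurable PP PP" "distr PP PP (f \<circ> g) = PP"
proof -
  show "f \<circ> g \<in> measurable PP PP" by (rule measurable_comp[OF assms(2,1)])
  have "distr PP PP (f \<circ> g) = distr (distr PP PP g) PP f"
    using assms by (subst distr_distr) auto
  thus "distr PP PP (f \<circ> g) = PP" using assms by simp
qed

lemma inv_mpt_T: "invertible_mpt PP Tm"
proof -
  have "bij Tm" by (rule o_bij[of Ti]) (auto simp: fun_eq_iff)
  thus ?thesis unfolding invertible_mpt_def space_PP inv_Tm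
    using Tm_meas Tm_mp Ti_meas Ti_mp by auto
qed

context cset begin

lemma inv_mpt_S: "invertible_mpt PP Sm"
proof -
  have "bij Sm" unfolding Sm_def by (rule o_bij[of "Rm \<circ> Ti \<circ> Rm"]) (auto simp: fun_eq_iff)
  moreover have "Sm \<in> measurable PP PP" "distr PP PP Sm = PP" unfolding Sm_def
    using mp_comp[OF mp_comp(1)[OF Rm_meas Tm_meas Rm_mp Tm_mp] Rm_meas mp_comp(2)[OF Rm_meas Tm_meas Rm_mp Tm_mp] Rm_mp]
    by auto
  moreover have "Rm \<circ> Ti \<circ> Rm \<in> measurable PP PP" "distr PP PP (Rm \<circ> Ti \<circ> Rm) = PP"
    using mp_comp[OF mp_comp(1)[OF Rm_meas Ti_meas Rm_mp Ti_mp] Rm_meas mp_comp(2)[OF Rm_meas Ti_meas Rm_mp Ti_mp] Rm_mp]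
    by auto
  ultimately show ?thesis unfolding invertible_mpt_def space_PP inv_Sm by auto
qed

definition AA :: "(nat \<Rightarrow> real) set" where "AA = {x. x (EE (False, 0)) \<in> {0..<1/2}}"

lemma AA_sets: "AA \<in> sets PP"
proof -
  have "(\<lambda>x. x (EE (False, 0))) \<in> measurable PP nu"
    unfolding PP_def by (rule measurable_component_singleton) auto
  from measurable_sets[OF this, of "{0..<1/2}"] show ?thesis by (simp add: AA_def vimage_def)
qed

lemma lab_F0[simp]: "lab a b (False, 0) = None" using a0 by (auto simp: lab_def)
lemma swp_F0[simp]: "swp a b (False, 0) = (True, 0)" by (simp add: swp_def)
lemma lab_Tb[simp]: "lab a b (True, b n) = Some n" by (auto simp: lab_def)
lemma swp_Tb[simp]: "swp a b (True, b n) = (False, a n)" using b0 by (auto simp: swp_def)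

lemma key_set: "zpreimage PP Tm (a n) AA \<inter> zpreimage PP Sm (b n) AA =
   (\<lambda>x. x (EE (False, a n))) -` ({0..<1/2} \<inter> phi (1 - c n) -` {0..<1/2})"
  by (auto simp: zpreimage_def ziter_Sm ziter_Tm AA_def Rm_def psi_def rho_def)

lemma val_eq: "measure PP (zpreimage PP Tm (a n) AA \<inter> zpreimage PP Sm (b n) AA) = c n"
proof -
  let ?C = "{0..<1/2} \<inter> phi (1 - c n) -` {0..<1/2::real}"
  have Cs: "?C \<in> sets nu" using measurable_sets[OF phi_meas, of "{0..<1/2}" "1 - c n"] by auto
  have m: "(\<lambda>x. x (EE (False, a n))) \<in> measurable PP nu"
    unfolding PP_def by (rule measurable_component_singleton) auto
  have "measure PP ((\<lambda>x. x (EE (False, a n))) -` ?C) = measure (distr PP nu (\<lambda>x. x (EE (False, a n)))) ?C"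
    using measure_distr[OF m Cs] by simp
  also have "distr PP nu (\<lambda>x. x (EE (False, a n))) = nu"
    unfolding PP_def by (rule distr_PiM_component) (auto intro: prob_nu)
  also have "measure nu ?C = 1 - (1 - c n)"
    using cb[of n] by (intro phi_value) auto
  finally show ?thesis by (simp add: key_set)
qed

lemma main: "\<exists>(M :: (nat \<Rightarrow> real) measure) T S A.
           prob_space M \<and> invertible_mpt M T \<and> invertible_mpt M S \<and> A \<in> sets M \<and>
           (\<forall>n. c n = measure M (zpreimage M T (a n) A \<inter> zpreimage M S (b n) A))"
  using prob_PP inv_mpt_T inv_mpt_S AA_sets val_eq by metis

end
theorem corollary4p2:
  fixes a b :: "nat \<Rightarrow> int" and c :: "nat \<Rightarrow> real"
  assumes "inj a" and "inj b"
    and "\<And>n. a n \<noteq> 0" and "\<And>n. b n \<noteq> 0"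
    and "\<And>n. 0 \<le> c n \<and> c n \<le> 1 / 4"
  shows "\<exists>(M :: (nat \<Rightarrow> real) measure) T S A.
           prob_space M \<and> invertible_mpt M T \<and> invertible_mpt M S \<and> A \<in> sets M \<and>
           (\<forall>n. c n = measure M (zpreimage M T (a n) A \<inter> zpreimage M S (b n) A))"
proof -
  interpret cset a b c using assms by unfold_locales auto
  show ?thesis by (rule main)
qed

end
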